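(* Let $N\subset M\subset G$ be subgroups with $N$ normal in $G$, and let $P:=\prod_{e\in E}T_e^ML_e^N$. Then for every vertex $v$ and every face $f$, $|M|\,P A_v^M P=|G|\,P A_v P$ and $P B_f^N P=|N|\,P B_f P$.
   Context: Setting. $G$ is a finite group; $\bar g$ denotes $g^{-1}$. A lattice is embedded in an orientable surface, with vertex set $V$, edge set $E$, face set $F$; every edge is oriented, no edge has equal endpoints, and a face with $s$ edges has $s$ distinct vertices (same conditions for the dual lattice). Dual edges $e^*$ are oriented so that $e^*$ crosses $e$ from right to left. For each edge $e$ there is an inverse edge $\bar e$ with reversed orientation ($\bar{\bar e}=e$); $\bar E$ is the set of inverse edges. Each edge $e\in E$ carries a qudit $\mathbb C[G]$ with orthonormal basis $\{|g\rangle\}_{g\in G}$; $\mathcal H_G=\bigotimes_{e\in E}\mathbb C[G]$. Single-qudit operators: $L^h=\sum_g|hg\rangle\langle g|$, $T^g=|g\rangle\langle g|$, $I=\sum_g|\bar g\rangle\langle g|$. Sites and triangles. A site is a pair $s=(v,f)$ with $f$ a face and $v$ a vertex of $f$; write $s=(v_s,f_s)$. A direct triangle $\tau=(s_0,s_1,e)$ consists of sites $s_0,s_1$ with $f_{s_0}=f_{s_1}$ and $e\in E\cup\bar E$ going from $v_{s_0}$ to $v_{s_1}$, such that $s_0,s_1,e$ form a triangle with sides in counterclockwise order. A dual triangle $\tau=(s_0,s_1,e^* )$ consists of sites with $v_{s_0}=v_{s_1}$ and a dual edge $e^*$ ($e\in E\cup\bar E$) going from the dual vertex $f_{s_0}^*$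 to $f_{s_1}^*$, with sides in clockwise order. Write $\partial_i\tau=s_i$, $e_\tau=e$. Triangle operators: for a dual triangle $L_\tau^h:=I^xL^hI^x$, for a direct triangle $T_\tau^g:=I^xT^gI^x$, acting on the qudit of the underlying edge of $e_\tau$, with $x=0$ if $e_\tau\in E$ and $x=1$ if $e_\tau\in\bar E$. Vertex and face operators. For a vertex $v$ and $g\in G$, $A_v^g$ acts on the qudits of the edges incident to $v$ by $|x\rangle\mapsto|gx\rangle$ for edges pointing into... more precisely, on each edge $e$ incident to $v$ it acts as $L_\tau^g$ for the dual triangle $\tau$ around $v$ crossing $e$ (i.e. left multiplication by $g$ on edges whose head/tail convention matches, right multiplication by $\bar g$ otherwise), and $A_v^gA_v^{g'}=A_v^{gg'}$. For a site $s=(v,f)$, $B_s^g$ is the projector onto states for which the ordered product of the edge values (inverted when the edge is traversed against its orientation) along the boundary of $f$, starting and ending at $v$ and going once around $f$ counterclockwise, equals $g$. Set $A_v:=\frac1{|G|}\sum_{h\in G}A_v^h$, $A_v^M:=\frac1{|M|}\sum_{m\in M}A_v^m$, $B_f:=B_s^1$, $B_f^N:=\sum_{n\in N}B_s^n$ (both independent of the choice of $s=(v,f)$). Edge operators. For an edge $e$, $L_e^N:=\frac1{|N|}\sum_{n\in N}L_\tau^n$ for any dual triangle $\tau$ with $e_\tau\in\{e,\bar e\}$ (independent of the choice since $N$ is normal), and $T_e^M:=\sum_{m\in M}T_{\tau'}^m$ for any direct triangle $\tau'$ with $e_{\tau'}\in\{e,\bar e\}$; i.e. $T_e^M$ projects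 the qudit of $e$ onto $\mathrm{span}\{|m\rangle:m\in M\}$. *)

theory Defs
  imports "HOL-Algebra.Algebra" "HOL-Library.FuncSet"
begin

section \<open>Lattice (cellular embedding in an oriented surface), combinatorial data\<close>

text \<open>A dart is a pair (e, b): (e, True) is the
edge e itself, (e, False) is its inverse edge. src e / tgt e are the tail / head of e.
bd f lists the boundary darts of the face f in counterclockwise order (a closed walk).\<close>

definition dstart :: "('e \<Rightarrow> 'v) \<Rightarrow> ('e \<Rightarrow> 'v) \<Rightarrow> 'e \<times> bool \<Rightarrow> 'v" where
  "dstart src tgt d = (if snd d then src (fst d) else tgt (fst d))"

definition dend :: "('e \<Rightarrow> 'v) \<Rightarrow> ('e \<Rightarrow> 'v) \<Rightarrow> 'e \<times> bool \<Rightarrow> 'v" where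
  "dend src tgt d = (if snd d then tgt (fst d) else src (fst d))"

definition lattice ::
  "'e set \<Rightarrow> ('e \<Rightarrow> 'v) \<Rightarrow> ('e \<Rightarrow> 'v) \<Rightarrow> 'f set \<Rightarrow> ('f \<Rightarrow> ('e \<times> bool) list) \<Rightarrow> bool" where
  "lattice E src tgt F bd \<longleftrightarrow>
     finite E \<and> finite F \<and>
     (\<forall>e\<in>E. src e \<noteq> tgt e) \<and>
     (\<forall>f\<in>F. bd f \<noteq> [] \<and> set (bd f) \<subseteq> E \<times> UNIV \<and>
        (\<forall>i<length (bd f). dend src tgt (bd f ! i) = dstart src tgt (bd f ! (Suc i mod length (bd f)))) \<and>
        distinct (map (dstart src tgt) (bd f))) \<and>
     (\<forall>d\<in>E \<times> UNIV. \<exists>!f. f \<in> F \<and> d \<in> set (bd f)) \<and>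
     (\<forall>f\<in>F. \<forall>e. \<not> ((e, True) \<in> set (bd f) \<and> (e, False) \<in> set (bd f)))"

definition vertices :: "'e set \<Rightarrow> ('e \<Rightarrow> 'v) \<Rightarrow> ('e \<Rightarrow> 'v) \<Rightarrow> 'v set" where
  "vertices E src tgt = src ` E \<union> tgt ` E"

section \<open>Operators on the Hilbert space of configurations\<close>

text \<open>Basis states of \<open>\<otimes>_{e\<in>E} C[G]\<close> are configurations E \<rightarrow> G (extensional).
Operators are represented by their matrices, vanishing outside configurations.\<close>

type_synonym ('e, 'g) op = "('e \<Rightarrow> 'g) \<Rightarrow> ('e \<Rightarrow> 'g) \<Rightarrow> complex"

definition confs :: "('g, 'b) monoid_scheme \<Rightarrow> 'e set \<Rightarrow> ('e \<Rightarrow> 'g) set" where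
  "confs G E = (E \<rightarrow>\<^sub>E carrier G)"

definition opmul :: "('g, 'b) monoid_scheme \<Rightarrow> 'e set \<Rightarrow> ('e, 'g) op \<Rightarrow> ('e, 'g) op \<Rightarrow> ('e, 'g) op" where
  "opmul G E A B = (\<lambda>x y. if x \<in> confs G E \<and> y \<in> confs G E
      then (\<Sum>z\<in>confs G E. A x z * B z y) else 0)"

definition opid :: "('g, 'b) monoid_scheme \<Rightarrow> 'e set \<Rightarrow> ('e, 'g) op" where
  "opid G E = (\<lambda>x y. if x \<in> confs G E \<and> y \<in> confs G E \<and> x = y then 1 else 0)"

definition smul :: "complex \<Rightarrow> ('e, 'g) op \<Rightarrow> ('e, 'g) op" where
  "smul c A = (\<lambda>x y. c * A x y)"

definition permop :: "('g, 'b) monoid_scheme \<Rightarrow> 'e set \<Rightarrow> (('e \<Rightarrow> 'g) \<Rightarrow> ('e \<Rightarrow> 'g)) \<Rightarrow> ('e, 'g) op" where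
  "permop G E phi = (\<lambda>x y. if x \<in> confs G E \<and> y \<in> confs G E \<and> x = phi y then 1 else 0)"

definition diagop :: "('g, 'b) monoid_scheme \<Rightarrow> 'e set \<Rightarrow> (('e \<Rightarrow> 'g) \<Rightarrow> bool) \<Rightarrow> ('e, 'g) op" where
  "diagop G E p = (\<lambda>x y. if x \<in> confs G E \<and> y \<in> confs G E \<and> x = y \<and> p y then 1 else 0)"

text \<open>Value of a dart: the edge value, inverted for an inverse edge (i.e. the action of I^x).\<close>
definition dval :: "('g, 'b) monoid_scheme \<Rightarrow> ('e \<Rightarrow> 'g) \<Rightarrow> 'e \<times> bool \<Rightarrow> 'g" where
  "dval G y d = (if snd d then y (fst d) else inv\<^bsub>G\<^esub> (y (fst d)))"

text \<open>I^x L^h I^x on the qudit of the underlying edge of the dart d (as a map on basis states).\<close>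
definition Ldart_map :: "('g, 'b) monoid_scheme \<Rightarrow> 'e \<times> bool \<Rightarrow> 'g \<Rightarrow> ('e \<Rightarrow> 'g) \<Rightarrow> ('e \<Rightarrow> 'g)" where
  "Ldart_map G d h y = y(fst d := (if snd d then h \<otimes>\<^bsub>G\<^esub> y (fst d)
                                   else inv\<^bsub>G\<^esub> (h \<otimes>\<^bsub>G\<^esub> inv\<^bsub>G\<^esub> (y (fst d)))))"

definition Ltri :: "('g, 'b) monoid_scheme \<Rightarrow> 'e set \<Rightarrow> 'e \<times> bool \<Rightarrow> 'g \<Rightarrow> ('e, 'g) op" where
  "Ltri G E d h = permop G E (Ldart_map G d h)"

text \<open>I^x T^g I^x on the qudit of the underlying edge of the dart d.\<close>
definition Ttri :: "('g, 'b) monoid_scheme \<Rightarrow> 'e set \<Rightarrow> 'e \<times> bool \<Rightarrow> 'g \<Rightarrow> ('e, 'g) op" where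
  "Ttri G E d g = diagop G E (\<lambda>y. dval G y d = g)"

text \<open>A_v^g: on each edge e incident to v acts as L_tau^g for the dual triangle tau around v
crossing e; with the paper's orientation conventions e_tau = e if e points away from v and
e_tau = inverse of e if e points into v (i.e. e_tau is the dart starting at v).
Since no edge is a loop and the edges are distinct, these act on distinct qudits and
commute; we apply them simultaneously.\<close>
definition vertex_map ::
  "('g, 'b) monoid_scheme \<Rightarrow> 'e set \<Rightarrow> ('e \<Rightarrow> 'v) \<Rightarrow> ('e \<Rightarrow> 'v) \<Rightarrow> 'v \<Rightarrow> 'g \<Rightarrow> ('e \<Rightarrow> 'g) \<Rightarrow> ('e \<Rightarrow> 'g)" where
  "vertex_map G E src tgt v g y = (\<lambda>e. if e \<in> E \<and> src e = v then g \<otimes>\<^bsub>G\<^esub> y e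
        else if e \<in> E \<and> tgt e = v then inv\<^bsub>G\<^esub> (g \<otimes>\<^bsub>G\<^esub> inv\<^bsub>G\<^esub> (y e))
        else y e)"

definition Avg :: "('g, 'b) monoid_scheme \<Rightarrow> 'e set \<Rightarrow> ('e \<Rightarrow> 'v) \<Rightarrow> ('e \<Rightarrow> 'v) \<Rightarrow> 'v \<Rightarrow> 'g \<Rightarrow> ('e, 'g) op" where
  "Avg G E src tgt v g = permop G E (vertex_map G E src tgt v g)"

definition AvK :: "('g, 'b) monoid_scheme \<Rightarrow> 'e set \<Rightarrow> ('e \<Rightarrow> 'v) \<Rightarrow> ('e \<Rightarrow> 'v) \<Rightarrow> 'g set \<Rightarrow> 'v \<Rightarrow> ('e, 'g) op" where
  "AvK G E src tgt K v = (\<lambda>x y. (1 / of_nat (card K)) * (\<Sum>k\<in>K. Avg G E src tgt v k x y))"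

definition Av :: "('g, 'b) monoid_scheme \<Rightarrow> 'e set \<Rightarrow> ('e \<Rightarrow> 'v) \<Rightarrow> ('e \<Rightarrow> 'v) \<Rightarrow> 'v \<Rightarrow> ('e, 'g) op" where
  "Av G E src tgt v = AvK G E src tgt (carrier G) v"

definition holonomy :: "('g, 'b) monoid_scheme \<Rightarrow> ('e \<Rightarrow> 'g) \<Rightarrow> ('e \<times> bool) list \<Rightarrow> 'g" where
  "holonomy G y ds = foldr (\<lambda>d acc. dval G y d \<otimes>\<^bsub>G\<^esub> acc) ds \<one>\<^bsub>G\<^esub>"

definition site_word ::
  "('e \<Rightarrow> 'v) \<Rightarrow> ('e \<Rightarrow> 'v) \<Rightarrow> ('f \<Rightarrow> ('e \<times> bool) list) \<Rightarrow> 'v \<Rightarrow> 'f \<Rightarrow> ('e \<times> bool) list" where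
  "site_word src tgt bd v f =
     rotate (SOME i. i < length (bd f) \<and> dstart src tgt (bd f ! i) = v) (bd f)"

definition Bsg :: "('g, 'b) monoid_scheme \<Rightarrow> 'e set \<Rightarrow> ('e \<Rightarrow> 'v) \<Rightarrow> ('e \<Rightarrow> 'v) \<Rightarrow>
    ('f \<Rightarrow> ('e \<times> bool) list) \<Rightarrow> 'v \<Rightarrow> 'f \<Rightarrow> 'g \<Rightarrow> ('e, 'g) op" where
  "Bsg G E src tgt bd v f g = diagop G E (\<lambda>y. holonomy G y (site_word src tgt bd v f) = g)"

definition BfK :: "('g, 'b) monoid_scheme \<Rightarrow> 'e set \<Rightarrow> ('e \<Rightarrow> 'v) \<Rightarrow> ('e \<Rightarrow> 'v) \<Rightarrow>
    ('f \<Rightarrow> ('e \<times> bool) list) \<Rightarrow> 'g set \<Rightarrow> 'v \<Rightarrow> 'f \<Rightarrow> ('e, 'g) op" where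
  "BfK G E src tgt bd K v f = (\<lambda>x y. \<Sum>k\<in>K. Bsg G E src tgt bd v f k x y)"

definition Bf :: "('g, 'b) monoid_scheme \<Rightarrow> 'e set \<Rightarrow> ('e \<Rightarrow> 'v) \<Rightarrow> ('e \<Rightarrow> 'v) \<Rightarrow>
    ('f \<Rightarrow> ('e \<times> bool) list) \<Rightarrow> 'v \<Rightarrow> 'f \<Rightarrow> ('e, 'g) op" where
  "Bf G E src tgt bd v f = Bsg G E src tgt bd v f \<one>\<^bsub>G\<^esub>"

text \<open>Edge operators L_e^N and T_e^M (using the triangle with e_tau = e).\<close>
definition LeK :: "('g, 'b) monoid_scheme \<Rightarrow> 'e set \<Rightarrow> 'g set \<Rightarrow> 'e \<Rightarrow> ('e, 'g) op" where
  "LeK G E K e = (\<lambda>x y. (1 / of_nat (card K)) * (\<Sum>n\<in>K. Ltri G E (e, True) n x y))"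

definition TeK :: "('g, 'b) monoid_scheme \<Rightarrow> 'e set \<Rightarrow> 'g set \<Rightarrow> 'e \<Rightarrow> ('e, 'g) op" where
  "TeK G E K e = (\<lambda>x y. \<Sum>m\<in>K. Ttri G E (e, True) m x y)"

text \<open>P := prod_{e in E} T_e^M L_e^N, the product taken along an enumeration es of E.\<close>
definition Pop :: "('g, 'b) monoid_scheme \<Rightarrow> 'e set \<Rightarrow> 'g set \<Rightarrow> 'g set \<Rightarrow> 'e list \<Rightarrow> ('e, 'g) op" where
  "Pop G E M N es = foldr (\<lambda>e Q. opmul G E (opmul G E (TeK G E M e) (LeK G E N e)) Q) es (opid G E)"

end

theory Submission imports Defs begin

context group begin
lemma sub_mult_r:
  assumes "subgroup H G" "h \<in> H" "a \<in> carrier G"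
  shows "a \<otimes> h \<in> H \<longleftrightarrow> a \<in> H"
proof
  assume "a \<otimes> h \<in> H"
  hence "(a \<otimes> h) \<otimes> inv h \<in> H" by (rule subgroup.m_closed[OF assms(1) _ subgroup.m_inv_closed[OF assms(1) assms(2)]])
  moreover have "(a \<otimes> h) \<otimes> inv h = a" using assms subgroup.mem_carrier[OF assms(1)]
    by (simp add: m_assoc)
  ultimately show "a \<in> H" by simp
next
  assume "a \<in> H" thus "a \<otimes> h \<in> H" by (rule subgroup.m_closed[OF assms(1) _ assms(2)])
qed

lemma sub_mult_l:
  assumes "subgroup H G" "h \<in> H" "a \<in> carrier G"
  shows "h \<otimes> a \<in> H \<longleftrightarrow> a \<in> H"
proof
  assume "h \<otimes> a \<in> H"
  hence "inv h \<otimes> (h \<otimes> a) \<in> H" by (rule subgroup.m_closed[OF assms(1) subgroup.m_inv_closed[OF assms(1) assms(2)]])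
  moreover have "inv h \<otimes> (h \<otimes> a) = a" using assms subgroup.mem_carrier[OF assms(1)]
    by (simp add: m_assoc[symmetric])
  ultimately show "a \<in> H" by simp
next
  assume "a \<in> H" thus "h \<otimes> a \<in> H" by (rule subgroup.m_closed[OF assms(1) assms(2)])
qed

lemma normal_conj_mult:
  assumes "N \<lhd> G" "n \<in> N" "a \<in> carrier G" "b \<in> carrier G"
  shows "a \<otimes> n \<otimes> b \<in> N \<longleftrightarrow> a \<otimes> b \<in> N"
proof -
  have sN: "subgroup N G" using normal_imp_subgroup[OF assms(1)] .
  have nc: "n \<in> carrier G" using subgroup.mem_carrier[OF sN assms(2)] .
  have c: "inv b \<otimes> n \<otimes> b \<in> N" using normal.inv_op_closed1[OF assms(1) assms(4) assms(2)] .
  have e1: "b \<otimes> (inv b \<otimes> (n \<otimes> b)) = n \<otimes> b"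
    using assms nc by (simp add: m_assoc[symmetric])
  have "a \<otimes> n \<otimes> b = (a \<otimes> b) \<otimes> (inv b \<otimes> n \<otimes> b)"
    using assms nc by (simp add: m_assoc e1)
  thus ?thesis using sub_mult_r[OF sN c] assms by simp
qed
end

lemma confs_ext: "x \<in> confs G E \<Longrightarrow> y \<in> confs G E \<Longrightarrow> (\<forall>e\<in>E. x e = y e) \<Longrightarrow> x = y"
  unfolding confs_def by (rule PiE_ext) auto

lemma confs_val: "x \<in> confs G E \<Longrightarrow> e \<in> E \<Longrightarrow> x e \<in> carrier G"
  unfolding confs_def by auto

lemma confs_upd: "x \<in> confs G E \<Longrightarrow> e \<in> E \<Longrightarrow> a \<in> carrier G \<Longrightarrow> x(e := a) \<in> confs G E"
  unfolding confs_def by (auto simp: PiE_iff extensional_def)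

lemma finite_confs: "finite E \<Longrightarrow> finite (carrier G) \<Longrightarrow> finite (confs G E)"
  unfolding confs_def by (rule finite_PiE) auto

definition rel :: "('g,'b) monoid_scheme \<Rightarrow> 'g set \<Rightarrow> 'g set \<Rightarrow> 'g \<Rightarrow> 'g \<Rightarrow> bool" where
  "rel G M N a b \<longleftrightarrow> a \<in> M \<and> a \<otimes>\<^bsub>G\<^esub> inv\<^bsub>G\<^esub> b \<in> N"

definition Rc :: "('g,'b) monoid_scheme \<Rightarrow> 'e set \<Rightarrow> 'g set \<Rightarrow> 'g set \<Rightarrow> 'e set \<Rightarrow> nat \<Rightarrow> ('e,'g) op" where
  "Rc G E M N S k = (\<lambda>x y. if x \<in> confs G E \<and> y \<in> confs G E \<and> (\<forall>e\<in>E-S. x e = y e)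
      \<and> (\<forall>e\<in>S. rel G M N (x e) (y e)) then (1 / of_nat (card N))^k else 0)"

lemma TeK_closed:
  assumes "finite M"
  shows "TeK G E M e x z = (if x \<in> confs G E \<and> z \<in> confs G E \<and> x = z \<and> z e \<in> M then 1 else 0)"
proof (cases "x \<in> confs G E \<and> z \<in> confs G E \<and> x = z")
  case True
  then show ?thesis unfolding TeK_def Ttri_def diagop_def dval_def
    using assms by (simp add: sum.delta')
next
  case False
  then show ?thesis unfolding TeK_def Ttri_def diagop_def dval_def by auto
qed

lemma LeK_closed:
  assumes "group G" "finite N" "N \<subseteq> carrier G" "e \<in> E"
  shows "LeK G E N e z y = (1 / of_nat (card N)) * (if z \<in> confs G E \<and> y \<in> confs G E
      \<and> (\<forall>e'\<in>E-{e}. z e' = y e') \<and> z e \<otimes>\<^bsub>G\<^esub> inv\<^bsub>G\<^esub> (y e) \<in> N then 1 else 0)"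
proof (cases "z \<in> confs G E \<and> y \<in> confs G E")
  case True
  interpret group G by fact
  have ze: "z e \<in> carrier G" "y e \<in> carrier G" using True assms(4) confs_val by metis+
  have "\<And>n. n \<in> N \<Longrightarrow> (z = y(e := n \<otimes>\<^bsub>G\<^esub> y e)) \<longleftrightarrow> ((\<forall>e'\<in>E-{e}. z e' = y e') \<and> n = z e \<otimes>\<^bsub>G\<^esub> inv\<^bsub>G\<^esub> (y e))"
  proof -
    fix n assume n: "n \<in> N"
    hence nc: "n \<in> carrier G" using assms by auto
    have "(z = y(e := n \<otimes>\<^bsub>G\<^esub> y e)) \<longleftrightarrow> ((\<forall>e'\<in>E-{e}. z e' = y e') \<and> z e = n \<otimes>\<^bsub>G\<^esub> y e)"
    proof
      assume "(\<forall>e'\<in>E-{e}. z e' = y e') \<and> z e = n \<otimes>\<^bsub>G\<^esub> y e"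
      thus "z = y(e := n \<otimes>\<^bsub>G\<^esub> y e)"
        using confs_ext[of z G E "y(e := n \<otimes>\<^bsub>G\<^esub> y e)"] confs_upd[of y G E e "n \<otimes>\<^bsub>G\<^esub> y e"] True assms(4) nc ze
        by auto
    qed auto
    also have "z e = n \<otimes>\<^bsub>G\<^esub> y e \<longleftrightarrow> n = z e \<otimes>\<^bsub>G\<^esub> inv\<^bsub>G\<^esub> (y e)"
      using nc ze by (metis inv_solve_right)
    finally show "(z = y(e := n \<otimes>\<^bsub>G\<^esub> y e)) \<longleftrightarrow> ((\<forall>e'\<in>E-{e}. z e' = y e') \<and> n = z e \<otimes>\<^bsub>G\<^esub> inv\<^bsub>G\<^esub> (y e))" .
  qed
  hence "(\<Sum>n\<in>N. Ltri G E (e, True) n z y) = (\<Sum>n\<in>N. if n = z e \<otimes>\<^bsub>G\<^esub> inv\<^bsub>G\<^esub> (y e) then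
       (if (\<forall>e'\<in>E-{e}. z e' = y e') then 1 else 0) else 0)"
    unfolding Ltri_def permop_def Ldart_map_def using True by (intro sum.cong) auto
  also have "\<dots> = (if (\<forall>e'\<in>E-{e}. z e' = y e') \<and> z e \<otimes>\<^bsub>G\<^esub> inv\<^bsub>G\<^esub> (y e) \<in> N then 1 else 0)"
    using assms(2) by (simp add: sum.delta)
  finally show ?thesis unfolding LeK_def using True by simp
next
  case False
  then show ?thesis unfolding LeK_def Ltri_def permop_def by auto
qed


lemma Q_closed:
  assumes "group G" "finite (carrier G)" "finite E" "finite N" "finite M" "N \<subseteq> carrier G" "e \<in> E"
  shows "opmul G E (TeK G E M e) (LeK G E N e) = Rc G E M N {e} 1"
proof (intro ext)
  fix x y
  show "opmul G E (TeK G E M e) (LeK G E N e) x y = Rc G E M N {e} 1 x y"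
  proof (cases "x \<in> confs G E \<and> y \<in> confs G E")
    case True
    have "(\<Sum>z\<in>confs G E. TeK G E M e x z * LeK G E N e z y)
        = (\<Sum>z\<in>confs G E. if x = z then (if x e \<in> M then LeK G E N e x y else 0) else 0)"
      using True by (intro sum.cong) (auto simp: TeK_closed[OF assms(5)])
    also have "\<dots> = (if x e \<in> M then LeK G E N e x y else 0)"
      using True finite_confs[OF assms(3,2)] by (simp add: sum.delta)
    finally show ?thesis unfolding opmul_def Rc_def rel_def
      using True by (auto simp: LeK_closed[OF assms(1,4,6,7)])
  next
    case False
    then show ?thesis unfolding opmul_def Rc_def by auto
  qed
qed

lemma step_closed:
  assumes "group G" "finite (carrier G)" "finite E" "e \<in> E" "e \<notin> S"
  shows "opmul G E (Rc G E M N {e} 1) (Rc G E M N S k) = Rc G E M N (insert e S) (Suc k)"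
proof (intro ext)
  fix x y
  show "opmul G E (Rc G E M N {e} 1) (Rc G E M N S k) x y = Rc G E M N (insert e S) (Suc k) x y"
  proof (cases "x \<in> confs G E \<and> y \<in> confs G E")
    case True
    define z0 where "z0 = x(e := y e)"
    have z0c: "z0 \<in> confs G E" unfolding z0_def using True assms(4) confs_upd confs_val by metis
    have "(\<Sum>z\<in>confs G E. Rc G E M N {e} 1 x z * Rc G E M N S k z y)
        = (\<Sum>z\<in>confs G E. if z = z0 then Rc G E M N {e} 1 x z0 * Rc G E M N S k z0 y else 0)"
    proof (intro sum.cong refl)
      fix z assume zc: "z \<in> confs G E"
      show "Rc G E M N {e} 1 x z * Rc G E M N S k z y = (if z = z0 then Rc G E M N {e} 1 x z0 * Rc G E M N S k z0 y else 0)"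
      proof (cases "z = z0")
        case False
        have "\<not> ((\<forall>e'\<in>E-{e}. x e' = z e') \<and> (\<forall>e'\<in>E-S. z e' = y e'))"
        proof
          assume h: "(\<forall>e'\<in>E-{e}. x e' = z e') \<and> (\<forall>e'\<in>E-S. z e' = y e')"
          have "z = z0" using zc z0c h assms(4,5) by (intro confs_ext) (auto simp: z0_def)
          thus False using False by simp
        qed
        thus ?thesis using False unfolding Rc_def by auto
      qed simp
    qed
    also have "\<dots> = Rc G E M N {e} 1 x z0 * Rc G E M N S k z0 y"
      using z0c finite_confs[OF assms(3,2)] by (simp add: sum.delta')
    also have "\<dots> = Rc G E M N (insert e S) (Suc k) x y"
      unfolding Rc_def using True z0c assms(4,5)
      by (auto simp: z0_def split: if_splits)
    finally show ?thesis unfolding opmul_def using True by simp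
  next
    case False
    then show ?thesis unfolding opmul_def Rc_def by auto
  qed
qed

lemma Pop_closed:
  assumes "group G" "finite (carrier G)" "finite E" "finite N" "finite M" "N \<subseteq> carrier G"
    "distinct es" "set es \<subseteq> E"
  shows "foldr (\<lambda>e Q. opmul G E (opmul G E (TeK G E M e) (LeK G E N e)) Q) es (opid G E)
     = Rc G E M N (set es) (length es)"
  using assms(7,8)
proof (induction es)
  case Nil
  show ?case unfolding opid_def Rc_def
    by (intro ext) (auto intro: confs_ext)
next
  case (Cons e es)
  then show ?case using Q_closed[OF assms(1-6), of e] step_closed[OF assms(1-3), of e "set es" M N "length es"]
    by simp
qed


context group begin
lemma inv_in_sub:
  assumes "subgroup H G" "a \<in> carrier G" shows "inv a \<in> H \<longleftrightarrow> a \<in> H"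
proof
  assume "inv a \<in> H" hence "inv (inv a) \<in> H" by (rule subgroup.m_inv_closed[OF assms(1)])
  thus "a \<in> H" using assms(2) by simp
qed (rule subgroup.m_inv_closed[OF assms(1)])

lemma rel_sigma:
  assumes sM: "subgroup M G" and nN: "N \<lhd> G" and NM: "N \<subseteq> M" and n: "n \<in> N"
    and x: "x \<in> carrier G" and a: "a \<in> carrier G" and y: "y \<in> carrier G"
  shows "rel G M N x (n \<otimes> a) = rel G M N x a" "rel G M N x (a \<otimes> inv n) = rel G M N x a"
    "rel G M N (n \<otimes> a) y = rel G M N a y" "rel G M N (a \<otimes> inv n) y = rel G M N a y"
proof -
  have sN: "subgroup N G" using normal_imp_subgroup[OF nN] .
  have nc: "n \<in> carrier G" using subgroup.mem_carrier[OF sN n] .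
  have ninv: "inv n \<in> N" using subgroup.m_inv_closed[OF sN n] .
  have nM: "n \<in> M" "inv n \<in> M" using n ninv NM by auto
  have "x \<otimes> inv (n \<otimes> a) = (x \<otimes> inv a) \<otimes> inv n" using x a nc by (simp add: inv_mult_group m_assoc)
  thus "rel G M N x (n \<otimes> a) = rel G M N x a" unfolding rel_def
    using sub_mult_r[OF sN ninv, of "x \<otimes> inv a"] x a by simp
  have "x \<otimes> inv (a \<otimes> inv n) = x \<otimes> n \<otimes> inv a" using x a nc by (simp add: inv_mult_group m_assoc)
  thus "rel G M N x (a \<otimes> inv n) = rel G M N x a" unfolding rel_def
    using normal_conj_mult[OF nN n x, of "inv a"] a by simp
  have "n \<otimes> a \<otimes> inv y = n \<otimes> (a \<otimes> inv y)" using y a nc by (simp add: m_assoc)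
  thus "rel G M N (n \<otimes> a) y = rel G M N a y" unfolding rel_def
    using sub_mult_l[OF sN n, of "a \<otimes> inv y"] sub_mult_l[OF sM nM(1) a] a y by simp
  show "rel G M N (a \<otimes> inv n) y = rel G M N a y" unfolding rel_def
    using normal_conj_mult[OF nN ninv a, of "inv y"] sub_mult_r[OF sM nM(2) a] a y by simp
qed
end

lemma holonomy_cong:
  "(\<forall>d\<in>set ds. z (fst d) = z' (fst d)) \<Longrightarrow> holonomy G z ds = holonomy G z' ds"
  by (induction ds) (auto simp: holonomy_def dval_def)

lemma holonomy_closed:
  "group G \<Longrightarrow> z \<in> confs G E \<Longrightarrow> set ds \<subseteq> E \<times> UNIV \<Longrightarrow> holonomy G z ds \<in> carrier G"
  by (induction ds) (auto simp: holonomy_def dval_def confs_val group.inv_closed group.is_monoid monoid.m_closed monoid.one_closed)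

lemma opmul3:
  assumes "finite (confs G E)" "x \<in> confs G E" "y \<in> confs G E"
  shows "opmul G E (opmul G E P A) Q x y = (\<Sum>w\<in>confs G E. \<Sum>z\<in>confs G E. P x z * A z w * Q w y)"
  unfolding opmul_def using assms by (auto simp: sum_distrib_right intro!: sum.cong)

lemma lin:
  "(\<Sum>w\<in>C. \<Sum>z\<in>C. P z * ((c::complex) * (\<Sum>k\<in>K. A k z w)) * Q w) = c * (\<Sum>k\<in>K. \<Sum>w\<in>C. \<Sum>z\<in>C. P z * A k z w * Q w)"
proof -
  have "(\<Sum>w\<in>C. \<Sum>z\<in>C. P z * (c * (\<Sum>k\<in>K. A k z w)) * Q w) = (\<Sum>w\<in>C. \<Sum>z\<in>C. \<Sum>k\<in>K. c * (P z * A k z w * Q w))"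
  proof (intro sum.cong refl)
    fix w z
    have "P z * (c * (\<Sum>k\<in>K. A k z w)) * Q w = c * ((P z * (\<Sum>k\<in>K. A k z w)) * Q w)"
      by (simp add: mult_ac)
    thus "P z * (c * (\<Sum>k\<in>K. A k z w)) * Q w = (\<Sum>k\<in>K. c * (P z * A k z w * Q w))"
      by (simp only: sum_distrib_left sum_distrib_right)
  qed
  also have "\<dots> = (\<Sum>w\<in>C. \<Sum>k\<in>K. \<Sum>z\<in>C. c * (P z * A k z w * Q w))"
    by (rule sum.cong[OF refl], rule sum.swap)
  also have "\<dots> = (\<Sum>k\<in>K. \<Sum>w\<in>C. \<Sum>z\<in>C. c * (P z * A k z w * Q w))"
    by (rule sum.swap)
  finally show ?thesis by (simp add: sum_distrib_left)
qed


theorem mainTheorem11: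
  fixes G :: "'g monoid" and M N :: "'g set"
    and E :: "'e set" and src tgt :: "'e \<Rightarrow> 'v" and F :: "'f set"
    and bd :: "'f \<Rightarrow> ('e \<times> bool) list" and es :: "'e list"
  assumes "group G" and "finite (carrier G)"
    and "subgroup M G" and "N \<lhd> G" and "N \<subseteq> M"
    and "lattice E src tgt F bd"
    and "distinct es" and "set es = E"
  shows "(\<forall>v \<in> vertices E src tgt.
            smul (of_nat (card M))
              (opmul G E (opmul G E (Pop G E M N es) (AvK G E src tgt M v)) (Pop G E M N es))
          = smul (of_nat (card (carrier G)))
              (opmul G E (opmul G E (Pop G E M N es) (Av G E src tgt v)) (Pop G E M N es)))
       \<and> (\<forall>f \<in> F. \<forall>v \<in> set (map (dstart src tgt) (bd f)).
            opmul G E (opmul G E (Pop G E M N es) (BfK G E src tgt bd N v f)) (Pop G E M N es)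
          = smul (of_nat (card N))
              (opmul G E (opmul G E (Pop G E M N es) (Bf G E src tgt bd v f)) (Pop G E M N es)))"
proof -
  interpret grp: group G by fact
  note lat = assms(6)[unfolded lattice_def]
  have fE: "finite E" by (rule conjunct1[OF lat])
  have latF: "\<forall>f\<in>F. bd f \<noteq> [] \<and> set (bd f) \<subseteq> E \<times> UNIV \<and>
        (\<forall>i<length (bd f). dend src tgt (bd f ! i) = dstart src tgt (bd f ! (Suc i mod length (bd f)))) \<and>
        distinct (map (dstart src tgt) (bd f))"
    by (rule conjunct1[OF conjunct2[OF conjunct2[OF conjunct2[OF lat]]]])
  have latT: "\<forall>f\<in>F. \<forall>e. \<not> ((e, True) \<in> set (bd f) \<and> (e, False) \<in> set (bd f))"
    by (rule conjunct2[OF conjunct2[OF conjunct2[OF conjunct2[OF conjunct2[OF lat]]]]])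
  have sM: "subgroup M G" by fact
  have sN: "subgroup N G" using normal_imp_subgroup[OF assms(4)] .
  have Mc: "M \<subseteq> carrier G" using subgroup.subset[OF sM] .
  have Nc: "N \<subseteq> carrier G" using subgroup.subset[OF sN] .
  have fM: "finite M" using finite_subset[OF Mc assms(2)] .
  have fN: "finite N" using finite_subset[OF Nc assms(2)] .
  have cM: "card M > 0" using subgroup.finite_imp_card_positive[OF sM assms(2)] .
  have cN: "card N > 0" using subgroup.finite_imp_card_positive[OF sN assms(2)] .
  have cG: "card (carrier G) > 0" using assms(2) grp.one_closed by (auto simp: card_gt_0_iff)
  have fC: "finite (confs G E)" using finite_confs[OF fE assms(2)] .
  define c where "c = (1 / of_nat (card N) :: complex)^(card E)"
  define P where "P = Rc G E M N E (card E)"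
  have "foldr (\<lambda>e Q. opmul G E (opmul G E (TeK G E M e) (LeK G E N e)) Q) es (opid G E)
     = Rc G E M N (set es) (length es)"
    by (rule Pop_closed[OF assms(1,2) fE fN fM Nc assms(7)]) (simp add: assms(8))
  hence Pe: "Pop G E M N es = P" unfolding Pop_def P_def
    using assms(8) distinct_card[OF assms(7)] by simp
  have Pv: "\<And>x z. P x z = (if x \<in> confs G E \<and> z \<in> confs G E \<and> (\<forall>e\<in>E. rel G M N (x e) (z e)) then c else 0)"
    unfolding P_def Rc_def c_def by auto
  have c0: "c \<noteq> 0" unfolding c_def using cN by simp

  have part1: "\<forall>v \<in> vertices E src tgt.
            smul (of_nat (card M)) (opmul G E (opmul G E P (AvK G E src tgt M v)) P)
          = smul (of_nat (card (carrier G))) (opmul G E (opmul G E P (Av G E src tgt v)) P)"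
  proof
    fix v assume v: "v \<in> vertices E src tgt"
    then obtain e0 where e0: "e0 \<in> E" "src e0 = v \<or> tgt e0 = v" unfolding vertices_def by auto
    define XX where "XX = (\<lambda>g x y. (\<Sum>w\<in>confs G E. \<Sum>z\<in>confs G E. P x z * Avg G E src tgt v g z w * P w y))"
    have X0: "XX g x y = 0" if g: "g \<in> carrier G" "g \<notin> M" for g x y
    proof -
      have "P x z * Avg G E src tgt v g z w * P w y = 0" for w z
      proof (rule ccontr)
        assume nz: "P x z * Avg G E src tgt v g z w * P w y \<noteq> 0"
        have nz1: "P x z \<noteq> 0" and nz2: "Avg G E src tgt v g z w \<noteq> 0" and nz3: "P w y \<noteq> 0"
          using nz by auto
        have h1: "x \<in> confs G E" "z \<in> confs G E" "\<forall>e\<in>E. rel G M N (x e) (z e)"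
          using nz1 unfolding Pv by (simp_all split: if_splits)
        have h2: "w \<in> confs G E" "y \<in> confs G E" "\<forall>e\<in>E. rel G M N (w e) (y e)"
          using nz3 unfolding Pv by (simp_all split: if_splits)
        have h3: "z = vertex_map G E src tgt v g w"
          using nz2 unfolding Avg_def permop_def by (simp split: if_splits)
        have xc: "x e0 \<in> carrier G" "z e0 \<in> carrier G" "w e0 \<in> carrier G"
          using h1 h2 e0 confs_val by metis+
        have xM: "x e0 \<in> M" and xz: "x e0 \<otimes>\<^bsub>G\<^esub> inv\<^bsub>G\<^esub> (z e0) \<in> M"
          using h1 e0 assms(5) unfolding rel_def by auto
        have zM: "z e0 \<in> M"
          using xz grp.sub_mult_l[OF sM xM, of "inv\<^bsub>G\<^esub> (z e0)"] grp.inv_in_sub[OF sM] xc by auto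
        have wM: "w e0 \<in> M" using h2 e0 unfolding rel_def by auto
        have "g \<in> M"
        proof (cases "src e0 = v")
          case True
          hence "z e0 = g \<otimes>\<^bsub>G\<^esub> w e0" using h3 e0 by (simp add: vertex_map_def)
          thus ?thesis using zM grp.sub_mult_r[OF sM wM g(1)] by simp
        next
          case False
          hence "z e0 = inv\<^bsub>G\<^esub> (g \<otimes>\<^bsub>G\<^esub> inv\<^bsub>G\<^esub> (w e0))" using h3 e0 by (simp add: vertex_map_def)
          hence "g \<otimes>\<^bsub>G\<^esub> inv\<^bsub>G\<^esub> (w e0) \<in> M" using zM grp.inv_in_sub[OF sM] xc g by simp
          moreover have iw: "inv\<^bsub>G\<^esub> (w e0) \<in> M" using subgroup.m_inv_closed[OF sM wM] .
          ultimately show ?thesis using grp.sub_mult_r[OF sM iw g(1)] by simp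
        qed
        thus False using g by simp
      qed
      hence "\<And>w z. P x z * Avg G E src tgt v g z w * P w y = 0" .
      thus ?thesis unfolding XX_def by (simp only: sum.neutral_const)
    qed
    have key: "of_nat (card K) * opmul G E (opmul G E P (AvK G E src tgt K v)) P x y = (\<Sum>k\<in>K. XX k x y)"
      if "card K > 0" "x \<in> confs G E" "y \<in> confs G E" for K x y
    proof -
      have "opmul G E (opmul G E P (AvK G E src tgt K v)) P x y = (1 / of_nat (card K)) * (\<Sum>k\<in>K. XX k x y)"
        unfolding opmul3[OF fC that(2,3)] AvK_def XX_def by (rule lin)
      thus ?thesis using that(1) by simp
    qed
    show "smul (of_nat (card M)) (opmul G E (opmul G E P (AvK G E src tgt M v)) P)
          = smul (of_nat (card (carrier G))) (opmul G E (opmul G E P (Av G E src tgt v)) P)"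
    proof (intro ext)
      fix x y
      show "smul (of_nat (card M)) (opmul G E (opmul G E P (AvK G E src tgt M v)) P) x y
          = smul (of_nat (card (carrier G))) (opmul G E (opmul G E P (Av G E src tgt v)) P) x y"
      proof (cases "x \<in> confs G E \<and> y \<in> confs G E")
        case True
        have "(\<Sum>k\<in>carrier G. XX k x y) = (\<Sum>k\<in>M. XX k x y)"
          using assms(2) Mc X0 by (intro sum.mono_neutral_right) auto
        thus ?thesis unfolding smul_def Av_def using key[OF cM] key[OF cG] True by simp
      next
        case False
        thus ?thesis unfolding smul_def opmul_def by auto
      qed
    qed
  qed

  have part2: "\<forall>f \<in> F. \<forall>v \<in> set (map (dstart src tgt) (bd f)).
            opmul G E (opmul G E P (BfK G E src tgt bd N v f)) P
          = smul (of_nat (card N)) (opmul G E (opmul G E P (Bf G E src tgt bd v f)) P)"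
  proof (intro ballI)
    fix f v assume f: "f \<in> F" and v: "v \<in> set (map (dstart src tgt) (bd f))"
    define sw where "sw = site_word src tgt bd v f"
    have bdf: "bd f \<noteq> []" "set (bd f) \<subseteq> E \<times> UNIV" "distinct (bd f)"
       "\<forall>e. \<not> ((e, True) \<in> set (bd f) \<and> (e, False) \<in> set (bd f))"
      using latF[rule_format, OF f] latT[rule_format, OF f] distinct_map by blast+
    have sw: "sw \<noteq> []" "set sw \<subseteq> E \<times> UNIV" "distinct sw"
       "\<forall>e. \<not> ((e, True) \<in> set sw \<and> (e, False) \<in> set sw)"
      using bdf unfolding sw_def site_word_def by auto
    then obtain d ds where dds: "sw = d # ds" by (cases sw) auto
    define e0 where "e0 = fst d"
    have e0E: "e0 \<in> E" using sw(2) dds e0_def by auto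
    have nd: "\<forall>d'\<in>set ds. fst d' \<noteq> e0"
    proof
      fix d' assume d': "d' \<in> set ds"
      show "fst d' \<noteq> e0"
      proof
        assume eq: "fst d' = e0"
        have "d' \<noteq> d" using sw(3) dds d' by auto
        hence "snd d' \<noteq> snd d" using eq e0_def prod_eqI by blast
        hence "(e0, True) \<in> set sw \<and> (e0, False) \<in> set sw"
          using d' dds eq e0_def by (cases d; cases d'; cases "snd d") auto
        thus False using sw(4) by blast
      qed
    qed
    define sig where "sig n a = a(e0 := if snd d then n \<otimes>\<^bsub>G\<^esub> a e0 else a e0 \<otimes>\<^bsub>G\<^esub> inv\<^bsub>G\<^esub> n)" for n a
    define YY where "YY n x y = (\<Sum>a\<in>confs G E. P x a * (if holonomy G a sw = n then 1 else 0) * P a y)" for n x y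
    have Yred: "opmul G E (opmul G E P (Bsg G E src tgt bd v f n)) P x y = YY n x y"
      if "x \<in> confs G E" "y \<in> confs G E" for n x y
    proof -
      have "(\<Sum>z\<in>confs G E. P x z * Bsg G E src tgt bd v f n z w * P w y)
          = P x w * (if holonomy G w sw = n then 1 else 0) * P w y" if w: "w \<in> confs G E" for w
      proof -
        have "(\<Sum>z\<in>confs G E. P x z * Bsg G E src tgt bd v f n z w * P w y)
          = (\<Sum>z\<in>confs G E. if z = w then P x w * (if holonomy G w sw = n then 1 else 0) * P w y else 0)"
          using w by (intro sum.cong) (auto simp: Bsg_def diagop_def sw_def)
        thus ?thesis using w fC by (simp add: sum.delta')
      qed
      thus ?thesis unfolding opmul3[OF fC that] YY_def by simp
    qed
    have Yeq: "YY n x y = YY \<one>\<^bsub>G\<^esub> x y" if n: "n \<in> N" and xy: "x \<in> confs G E" "y \<in> confs G E" for n x y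
    proof -
      have nc: "n \<in> carrier G" using n Nc by auto
      have ninv: "inv\<^bsub>G\<^esub> n \<in> N" using subgroup.m_inv_closed[OF sN n] .
      have sigc: "sig m a \<in> confs G E" if "a \<in> confs G E" "m \<in> carrier G" for m a
      proof -
        have ac: "a e0 \<in> carrier G" using confs_val[OF that(1) e0E] .
        show ?thesis unfolding sig_def using ac that(2)
          by (simp add: confs_upd[OF that(1) e0E] grp.m_closed)
      qed
      have siginv1: "sig (inv\<^bsub>G\<^esub> n) (sig n a) = a" if "a \<in> confs G E" for a
      proof -
        have ac: "a e0 \<in> carrier G" using that e0E confs_val by metis
        show ?thesis
        proof (cases "snd d")
          case True thus ?thesis unfolding sig_def using ac nc by (simp add: grp.m_assoc[symmetric])
        next
          case False thus ?thesis unfolding sig_def using ac nc by (simp add: grp.m_assoc)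
        qed
      qed
      have siginv2: "sig n (sig (inv\<^bsub>G\<^esub> n) a) = a" if "a \<in> confs G E" for a
      proof -
        have ac: "a e0 \<in> carrier G" using that e0E confs_val by metis
        show ?thesis
        proof (cases "snd d")
          case True thus ?thesis unfolding sig_def using ac nc by (simp add: grp.m_assoc[symmetric])
        next
          case False thus ?thesis unfolding sig_def using ac nc by (simp add: grp.m_assoc)
        qed
      qed
      have hol: "holonomy G (sig n a) sw = n \<otimes>\<^bsub>G\<^esub> holonomy G a sw" if a: "a \<in> confs G E" for a
      proof -
        have h1: "holonomy G (sig n a) ds = holonomy G a ds"
          using nd by (intro holonomy_cong) (auto simp: sig_def)
        have ac: "a e0 \<in> carrier G" using a e0E confs_val by metis
        have h2: "dval G (sig n a) d = n \<otimes>\<^bsub>G\<^esub> dval G a d"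
          using ac nc unfolding sig_def dval_def e0_def
          by (auto simp: grp.inv_mult_group)
        have hc: "holonomy G a ds \<in> carrier G" using holonomy_closed[OF assms(1) a] sw(2) dds by auto
        have dc: "dval G a d \<in> carrier G" using ac unfolding dval_def e0_def by auto
        show ?thesis unfolding dds using h1 h2 hc dc nc
          by (simp add: holonomy_def grp.m_assoc)
      qed
      have Pinv: "P x (sig n a) = P x a" "P (sig n a) y = P a y" if a: "a \<in> confs G E" for a
      proof -
        have ac: "a e0 \<in> carrier G" using a e0E confs_val by metis
        have xc: "x e0 \<in> carrier G" "y e0 \<in> carrier G" using xy e0E confs_val by metis+
        have r1: "rel G M N (x e) (sig n a e) = rel G M N (x e) (a e)" for e
          unfolding sig_def using grp.rel_sigma[OF sM assms(4,5) n xc(1) ac xc(2)] by auto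
        have r2: "rel G M N (sig n a e) (y e) = rel G M N (a e) (y e)" for e
          unfolding sig_def using grp.rel_sigma[OF sM assms(4,5) n xc(1) ac xc(2)] by auto
        show "P x (sig n a) = P x a" unfolding Pv using r1 sigc[OF a nc] a by simp
        show "P (sig n a) y = P a y" unfolding Pv using r2 sigc[OF a nc] a by simp
      qed
      show ?thesis unfolding YY_def
      proof (rule sym, rule sum.reindex_bij_witness[of _ "sig (inv\<^bsub>G\<^esub> n)" "sig n"])
        fix a assume a: "a \<in> confs G E"
        show "sig (inv\<^bsub>G\<^esub> n) (sig n a) = a" using siginv1[OF a] .
        show "sig n a \<in> confs G E" using sigc[OF a nc] .
        have "holonomy G (sig n a) sw = n \<longleftrightarrow> holonomy G a sw = \<one>\<^bsub>G\<^esub>"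
          using hol[OF a] holonomy_closed[OF assms(1) a sw(2)] nc by simp
        thus "P x (sig n a) * (if holonomy G (sig n a) sw = n then 1 else 0) * P (sig n a) y
            = P x a * (if holonomy G a sw = \<one>\<^bsub>G\<^esub> then 1 else 0) * P a y"
          using Pinv[OF a] by simp
      next
        fix b assume b: "b \<in> confs G E"
        show "sig n (sig (inv\<^bsub>G\<^esub> n) b) = b" using siginv2[OF b] .
        show "sig (inv\<^bsub>G\<^esub> n) b \<in> confs G E" using sigc[OF b] nc by simp
      qed
    qed
    show "opmul G E (opmul G E P (BfK G E src tgt bd N v f)) P
          = smul (of_nat (card N)) (opmul G E (opmul G E P (Bf G E src tgt bd v f)) P)"
    proof (intro ext)
      fix x y
      show "opmul G E (opmul G E P (BfK G E src tgt bd N v f)) P x y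
          = smul (of_nat (card N)) (opmul G E (opmul G E P (Bf G E src tgt bd v f)) P) x y"
      proof (cases "x \<in> confs G E \<and> y \<in> confs G E")
        case True
        have "opmul G E (opmul G E P (BfK G E src tgt bd N v f)) P x y
            = (\<Sum>w\<in>confs G E. \<Sum>z\<in>confs G E. P x z * (1 * (\<Sum>k\<in>N. Bsg G E src tgt bd v f k z w)) * P w y)"
          unfolding opmul3[OF fC True[THEN conjunct1] True[THEN conjunct2]] BfK_def by simp
        also have "\<dots> = (\<Sum>k\<in>N. YY k x y)"
          unfolding lin using Yred True by (simp add: opmul3[OF fC])
        also have "\<dots> = (\<Sum>k\<in>N. YY \<one>\<^bsub>G\<^esub> x y)" using Yeq True by simp
        also have "\<dots> = of_nat (card N) * YY \<one>\<^bsub>G\<^esub> x y" by simp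
        finally show ?thesis unfolding smul_def Bf_def using Yred True by simp
      next
        case False
        thus ?thesis unfolding smul_def opmul_def by auto
      qed
    qed
  qed
  show ?thesis using part1 part2 Pe by simp
qed

end
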